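(* Let $K\subseteq\mathbb{R}^n$ be a nonempty compact set, let $\mathbf{c}\in\mathbb{Z}^n$, $F:=F_K(\mathbf{c})$, and assume $h_K(\mathbf{c})\in\mathbb{Z}$. Let $\mathbf{a}_1,\dots,\mathbf{a}_k\in\mathbb{Z}^n$. Then there exist integers $n_1,\dots,n_k\ge0$ such that $$\mathrm{CG}\big(K,(\mathbf{a}_1+n_1\mathbf{c},\dots,\mathbf{a}_k+n_k\mathbf{c})\big)\cap H^=_K(\mathbf{c})=\mathrm{CG}\big(F,(\mathbf{a}_1,\dots,\mathbf{a}_k)\big).$$
   Context: $h_K(\mathbf{a})=\sup_{\mathbf{x}\in K}\mathbf{a}\mathbf{x}$, with $h_\emptyset\equiv-\infty$. For nonempty compact $K$: $H^=_K(\mathbf{a}):=\{\mathbf{x}:\mathbf{a}\mathbf{x}=h_K(\mathbf{a})\}$ and $F_K(\mathbf{a}):=K\cap H^=_K(\mathbf{a})$. For $\mathbf{a}\in\mathbb{Z}^n$, $\mathrm{CG}(K,\mathbf{a}):=K\cap\{\mathbf{x}:\mathbf{a}\mathbf{x}\le\lfloor h_K(\mathbf{a})\rfloor\}$; for a list, $\mathrm{CG}(K,(\mathbf{a}_1,\dots,\mathbf{a}_k)):=\mathrm{CG}(\mathrm{CG}(K,\mathbf{a}_1),(\mathbf{a}_2,\dots,\mathbf{a}_k))$ and $\mathrm{CG}(K,\emptyset)=K$. *)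

theory Defs
  imports "HOL-Analysis.Analysis"
begin

text \<open>Support function h_K(a) = sup over x in K of a.x (only used for nonempty compact K,
  or inside an intersection with K, so the value at the empty set is irrelevant).\<close>
definition supp_fun :: "(real^'n) set \<Rightarrow> real^'n \<Rightarrow> real" where
  "supp_fun K a = Sup ((\<lambda>x. a \<bullet> x) ` K)"

definition Heq :: "(real^'n) set \<Rightarrow> real^'n \<Rightarrow> (real^'n) set" where
  "Heq K a = {x. a \<bullet> x = supp_fun K a}"

definition face :: "(real^'n) set \<Rightarrow> real^'n \<Rightarrow> (real^'n) set" where
  "face K a = K \<inter> Heq K a"

definition int_vec :: "real^'n \<Rightarrow> bool" where
  "int_vec a \<longleftrightarrow> (\<forall>i. a $ i \<in> \<int>)"

definition CG :: "(real^'n) set \<Rightarrow> real^'n \<Rightarrow> (real^'n) set" where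
  "CG K a = K \<inter> {x. a \<bullet> x \<le> of_int \<lfloor>supp_fun K a\<rfloor>}"

fun CG_list :: "(real^'n) set \<Rightarrow> (real^'n) list \<Rightarrow> (real^'n) set" where
  "CG_list K [] = K"
| "CG_list K (a # as) = CG_list (CG K a) as"

end

theory Submission
  imports Defs
begin

lemma cg_compact: "compact K \<Longrightarrow> compact (CG K a)"
  unfolding CG_def
  by (intro compact_Int_closed closed_halfspace_le)

lemma cg_sub: "CG K a \<subseteq> K" unfolding CG_def by auto

lemma cglist_sub: "CG_list K as \<subseteq> K"
proof (induction as arbitrary: K)
  case Nil then show ?case by simp
next
  case (Cons a as) then show ?case using cg_sub by (metis CG_list.simps(2) order_trans)
qed

lemma cglist_empty: "CG_list {} as = {}"
  using cglist_sub by blast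

lemma cglist_compact: "compact K \<Longrightarrow> compact (CG_list K as)"
  by (induction as arbitrary: K) (auto simp: cg_compact)

lemma img_compact: "compact K \<Longrightarrow> compact ((\<lambda>x. a \<bullet> x) ` K)"
  by (intro compact_continuous_image) (auto intro!: continuous_intros)

lemma supp_upper: "compact K \<Longrightarrow> x \<in> K \<Longrightarrow> a \<bullet> x \<le> supp_fun K a"
  unfolding supp_fun_def
  by (intro cSup_upper) (auto intro!: bounded_imp_bdd_above compact_imp_bounded img_compact)

lemma supp_attained: "compact K \<Longrightarrow> K \<noteq> {} \<Longrightarrow> \<exists>x\<in>K. supp_fun K a = a \<bullet> x"
proof -
  assume K: "compact K" "K \<noteq> {}"
  obtain s where s: "s \<in> (\<lambda>x. a \<bullet> x) ` K" "\<forall>t\<in>(\<lambda>x. a \<bullet> x) ` K. t \<le> s"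
    using compact_attains_sup[OF img_compact[OF K(1)]] K(2) by blast
  then obtain x where x: "x \<in> K" "s = a \<bullet> x" by blast
  have "supp_fun K a = s" unfolding supp_fun_def using s by (intro cSup_eq_maximum) auto
  then show ?thesis using x by blast
qed

lemma step:
  fixes K :: "(real^'n) set" and c a :: "real^'n"
  assumes K: "compact K" and d: "\<forall>x\<in>K. c \<bullet> x \<le> of_int d"
    and ne: "K \<inter> {x. c \<bullet> x = of_int d} \<noteq> {}"
  shows "\<exists>n::nat. CG K (a + of_nat n *\<^sub>R c) \<inter> {x. c \<bullet> x = of_int d}
          = CG (K \<inter> {x. c \<bullet> x = of_int d}) a"
proof -
  define H where "H = {x. c \<bullet> x = (of_int d::real)}"
  define F where "F = K \<inter> H"
  have Fc: "compact F" unfolding F_def H_def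
    by (intro compact_Int_closed K) (simp add: closed_hyperplane)
  have Fne: "F \<noteq> {}" using ne unfolding F_def H_def by simp
  define m where "m = \<lfloor>supp_fun F a\<rfloor>"
  define S where "S = {x\<in>K. a \<bullet> x \<ge> of_int m + 1}"
  have Sc: "compact S" unfolding S_def
    using compact_Int_closed[OF K closed_halfspace_ge[of "of_int m + 1" a]]
    by (simp add: Int_def inner_commute)
  obtain eta where eta: "eta > 0" "\<forall>x\<in>S. c \<bullet> x \<le> of_int d - eta"
  proof (cases "S = {}")
    case True then show ?thesis using that[of 1] by auto
  next
    case False
    obtain x0 where x0: "x0 \<in> S" "supp_fun S c = c \<bullet> x0"
      using supp_attained[OF Sc False] by blast
    have "c \<bullet> x0 < of_int d"
    proof (rule ccontr)
      assume "\<not> c \<bullet> x0 < of_int d"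
      then have "x0 \<in> F" using x0 d unfolding S_def F_def H_def by force
      then have "a \<bullet> x0 \<le> supp_fun F a" using supp_upper[OF Fc] by blast
      moreover have "a \<bullet> x0 \<ge> of_int m + 1" using x0 unfolding S_def by blast
      ultimately show False unfolding m_def by linarith
    qed
    then show ?thesis
      using that[of "of_int d - c \<bullet> x0"] supp_upper[OF Sc, of _ c] x0 by force
  qed
  define A where "A = supp_fun K a"
  obtain n :: nat where n: "(A - (of_int m + 1)) / eta < of_nat n"
    using reals_Archimedean2 by blast
  then have nA: "A - (of_int m + 1) < of_nat n * eta" using eta by (simp add: field_simps)
  have bound: "(a + of_nat n *\<^sub>R c) \<bullet> x < of_int m + 1 + of_nat n * of_int d" if x: "x \<in> K" for x
  proof (cases "x \<in> S")
    case True
    have "a \<bullet> x \<le> A" using supp_upper[OF K x] unfolding A_def .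
    moreover have "of_nat n * (c \<bullet> x) \<le> of_nat n * (of_int d - eta)"
      using eta True by (intro mult_left_mono) auto
    ultimately show ?thesis using nA by (simp add: inner_add_left algebra_simps)
  next
    case False
    then have "a \<bullet> x < of_int m + 1" using x unfolding S_def by auto
    moreover have "of_nat n * (c \<bullet> x) \<le> of_nat n * of_int d"
      using d x by (intro mult_left_mono) auto
    ultimately show ?thesis by (simp add: inner_add_left algebra_simps)
  qed
  define b where "b = a + of_nat n *\<^sub>R c"
  have Kne: "K \<noteq> {}" using Fne unfolding F_def by blast
  obtain x1 where x1: "x1 \<in> K" "supp_fun K b = b \<bullet> x1" using supp_attained[OF K Kne] by blast
  obtain xf where xf: "xf \<in> F" "supp_fun F a = a \<bullet> xf" using supp_attained[OF Fc Fne] by blast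
  have "supp_fun K b < of_int m + 1 + of_nat n * of_int d" using bound[OF x1(1)] x1 b_def by simp
  moreover have "supp_fun K b \<ge> b \<bullet> xf" using supp_upper[OF K] xf unfolding F_def by blast
  moreover have "b \<bullet> xf = supp_fun F a + of_nat n * of_int d"
    using xf unfolding b_def F_def H_def by (simp add: inner_add_left)
  moreover have "supp_fun F a \<ge> of_int m" unfolding m_def by simp
  ultimately have fl: "\<lfloor>supp_fun K b\<rfloor> = m + int n * d"
    by (subst floor_eq_iff) auto
  have "CG K b \<inter> H = F \<inter> {x. a \<bullet> x \<le> of_int m}"
  proof -
    have "\<And>x. x \<in> H \<Longrightarrow> (b \<bullet> x \<le> of_int (m + int n * d)) = (a \<bullet> x \<le> of_int m)"
      unfolding b_def H_def by (simp add: inner_add_left)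
    then show ?thesis unfolding CG_def fl F_def by auto
  qed
  then show ?thesis unfolding CG_def m_def F_def H_def b_def by auto
qed

lemma gen:
  fixes K :: "(real^'n) set" and c :: "real^'n" and as :: "(real^'n) list"
  assumes "compact K" and "\<forall>x\<in>K. c \<bullet> x \<le> of_int d"
  shows "\<exists>ns :: nat list. length ns = length as \<and>
     CG_list K (map2 (\<lambda>a m. a + of_nat m *\<^sub>R c) as ns) \<inter> {x. c \<bullet> x = of_int d}
       = CG_list (K \<inter> {x. c \<bullet> x = of_int d}) as"
  using assms
proof (induction as arbitrary: K)
  case Nil then show ?case by simp
next
  case (Cons a as)
  define H where "H = {x. c \<bullet> x = (of_int d::real)}"
  show ?case
  proof (cases "K \<inter> H = {}")
    case True
    have "CG_list K (map2 (\<lambda>a m. a + of_nat m *\<^sub>R c) (a # as) (replicate (length (a#as)) 0)) \<subseteq> K"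
      by (rule cglist_sub)
    then show ?thesis using True unfolding H_def
      by (intro exI[of _ "replicate (length (a#as)) 0"]) (auto simp: cglist_empty simp del: CG_list.simps)
  next
    case False
    obtain n :: nat where n: "CG K (a + of_nat n *\<^sub>R c) \<inter> H = CG (K \<inter> H) a"
      using step[OF Cons.prems] False unfolding H_def by blast
    define K1 where "K1 = CG K (a + of_nat n *\<^sub>R c)"
    have K1: "compact K1" "\<forall>x\<in>K1. c \<bullet> x \<le> of_int d"
      using cg_compact[OF Cons.prems(1)] cg_sub Cons.prems(2) unfolding K1_def by blast+
    obtain ns where ns: "length ns = length as"
      "CG_list K1 (map2 (\<lambda>a m. a + of_nat m *\<^sub>R c) as ns) \<inter> H = CG_list (K1 \<inter> H) as"
      using Cons.IH[OF K1] unfolding H_def by blast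
    show ?thesis
      by (intro exI[of _ "n # ns"]) (use ns n in \<open>simp add: K1_def H_def\<close>)
  qed
qed

theorem lemma4p1:
  fixes K :: "(real^'n) set" and c :: "real^'n" and as :: "(real^'n) list"
  assumes "K \<noteq> {}" and "compact K"
    and "int_vec c" and "supp_fun K c \<in> \<int>"
    and "\<forall>a\<in>set as. int_vec a"
  shows "\<exists>ns :: nat list. length ns = length as \<and>
     CG_list K (map2 (\<lambda>a m. a + of_nat m *\<^sub>R c) as ns) \<inter> Heq K c
       = CG_list (face K c) as"
proof -
  obtain d where d: "supp_fun K c = of_int d" using assms(4) Ints_cases by blast
  have "\<forall>x\<in>K. c \<bullet> x \<le> of_int d" using supp_upper[OF assms(2)] d by metis
  from gen[OF assms(2) this, of as] show ?thesis
    unfolding face_def Heq_def d by simp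
qed

end
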